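(* Let $f:\{1,\dots,n\}\to\{0,1\}$, let $S=\{i: f(i)=1\}$, and let $T=f(1)f(2)\cdots f(n)$. Then the number $r$ of runs in the Burrows–Wheeler Transform of $T$ satisfies $r\le 2|S|+1$.
   Context: The Burrows–Wheeler Transform (BWT) of $T$ is the last column of the matrix whose rows are the cyclic rotations of $T$ sorted lexicographically; it is a permutation of the symbols of $T$. $r$ is the number of maximal runs of equal consecutive symbols in the BWT. *)

theory Defs
  imports Main "HOL-Library.List_Lexorder"
begin

text \<open>Cyclic rotations of a word, sorted lexicographically (lexicographic order on
  lists from List_Lexorder, symbols ordered by their own order); the BWT is the
  last column of this sorted matrix.\<close>

definition rotations :: "'a list \<Rightarrow> 'a list list" where
  "rotations T = map (\<lambda>i. rotate i T) [0..<length T]"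

definition bwt :: "'a::linorder list \<Rightarrow> 'a list" where
  "bwt T = map last (sort (rotations T))"

definition runs :: "'a list \<Rightarrow> nat" where
  "runs w = length (remdups_adj w)"

end

theory Submission
  imports Defs "HOL-Library.Multiset"
begin

lemma runs_bin:
  "set w \<subseteq> {0,1::nat} \<Longrightarrow>
   length (remdups_adj w) + (if w \<noteq> [] \<and> hd w = 1 then 1 else 0) \<le> 2 * length (filter (\<lambda>x. x = 1) w) + 1"
proof (induction w rule: remdups_adj.induct)
  case 1 then show ?case by simp
next
  case (2 x) then show ?case by auto
next
  case (3 x y xs)
  then show ?case by (auto split: if_splits)
qed

lemma last_rot:
  assumes "T \<noteq> []"
  shows "map (\<lambda>i. last (rotate i T)) [0..<length T] = last T # butlast T"
proof (rule nth_equalityI)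
  show "length (map (\<lambda>i. last (rotate i T)) [0..<length T]) = length (last T # butlast T)"
    using assms by simp
next
  fix i assume "i < length (map (\<lambda>i. last (rotate i T)) [0..<length T])"
  then have i: "i < length T" by simp
  show "map (\<lambda>i. last (rotate i T)) [0..<length T] ! i = (last T # butlast T) ! i"
  proof (cases i)
    case 0 then show ?thesis using assms by simp
  next
    case (Suc j)
    have "rotate i T = drop i T @ take i T" using i by (simp add: rotate_drop_take)
    moreover have "take i T \<noteq> []" using i Suc by (cases T) auto
    ultimately have "last (rotate i T) = last (take i T)" by simp
    also have "\<dots> = T ! j" using i Suc \<open>take i T \<noteq> []\<close>
      by (simp add: last_conv_nth)
    finally have "last (rotate i T) = T ! j" .
    then show ?thesis using i Suc assms by (simp add: nth_butlast)
  qed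
qed

lemma mset_bwt: "mset (bwt T) = mset T"
proof (cases "T = []")
  case True then show ?thesis by (simp add: bwt_def rotations_def)
next
  case False
  have "mset (bwt T) = image_mset last (mset (rotations T))"
    by (simp add: bwt_def)
  also have "\<dots> = mset (map (\<lambda>i. last (rotate i T)) [0..<length T])"
    by (simp add: rotations_def image_mset.compositionality comp_def)
  also have "\<dots> = mset (last T # butlast T)" using last_rot[OF False] by simp
  also have "\<dots> = mset T"
    by (subst (2) append_butlast_last_id[OF False, symmetric]) simp
  finally show ?thesis .
qed

theorem lemma12:
  fixes f :: "nat \<Rightarrow> nat" and n :: nat
  assumes "\<forall>i\<in>{1..n}. f i \<in> {0, 1}"
  shows "runs (bwt (map f [1..<n+1])) \<le> 2 * card {i \<in> {1..n}. f i = 1} + 1"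
proof -
  let ?T = "map f [1..<n+1]"
  have m: "mset (bwt ?T) = mset ?T" by (rule mset_bwt)
  have s: "set (bwt ?T) \<subseteq> {0,1}" using assms
    unfolding mset_eq_setD[OF m]
  proof (clarsimp simp del: upt_Suc)
    fix x assume "Suc 0 \<le> x" "x < Suc n" "0 < f x"
    then show "f x = Suc 0" using assms by force
  qed
  have r: "runs (bwt ?T) \<le> 2 * length (filter (\<lambda>x. x = 1) (bwt ?T)) + 1"
    using runs_bin[OF s] unfolding runs_def by linarith
  have "length (filter (\<lambda>x. x = 1) (bwt ?T)) = length (filter (\<lambda>x. x = 1) ?T)"
    by (metis m mset_filter size_mset)
  also have "\<dots> = length (filter (\<lambda>i. f i = 1) [1..<n+1])"
    by (simp add: filter_map comp_def del: upt_Suc)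
  also have "\<dots> = card (set (filter (\<lambda>i. f i = 1) [1..<n+1]))"
    by (rule distinct_card[symmetric]) simp
  also have "set (filter (\<lambda>i. f i = 1) [1..<n+1]) = {i \<in> {1..n}. f i = 1}"
    by auto
  finally show ?thesis using r by simp
qed

end
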